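(* For $n\ge 0$ and $q\ge1$, let $\psi:\mathcal{B}_n\to\mathcal{B}_{n+q+1}$ be defined by $\psi(v01^k)=v001^{k+q}$ for any binary word $v$ and $k\ge0$, and $\psi(1^n)=1^{n+q+1}$. Then $\psi(\mathcal{W}^q_n)$ is exactly the set of $q$-decreasing words of length $n+q+1$ ending with at least $q$ letters $1$.
   Context: $\mathcal{B}_n$ is the set of binary words of length $n$. For $q\ge1$, a binary word is $q$-decreasing if for every maximal run of $0$s, of length $a>0$, together with the (possibly empty) maximal run of $1$s immediately following it, of length $b$, one has $q\cdot a>b$; $\mathcal{W}^q_n$ is the set of $q$-decreasing words of length $n$. *)

theory Defs
  imports Main
begin

text \<open>Binary words are lists of booleans: False encodes the letter 0, True the letter 1.\<close>

definition binwords :: "nat \<Rightarrow> bool list set" where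
  "binwords n = {w. length w = n}"

text \<open>A word is q-decreasing if every maximal run of 0s (length a > 0) followed by the
maximal (possibly empty) run of 1s immediately after it (length b) satisfies q*a > b.\<close>
definition q_decreasing :: "nat \<Rightarrow> bool list \<Rightarrow> bool" where
  "q_decreasing q w \<longleftrightarrow>
     (\<forall>u a b v. w = u @ replicate a False @ replicate b True @ v \<and> 0 < a
        \<and> (u = [] \<or> last u = True) \<and> (v = [] \<or> hd v = False) \<longrightarrow> b < q * a)"

definition qdec_words :: "nat \<Rightarrow> nat \<Rightarrow> bool list set" where
  "qdec_words q n = {w \<in> binwords n. q_decreasing q w}"

definition psi :: "nat \<Rightarrow> bool list \<Rightarrow> bool list" where
  "psi q w = (if \<forall>x\<in>set w. x then replicate (length w + q + 1) True
     else (let k = length (takeWhile (\<lambda>x. x) (rev w));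
               v = take (length w - k - 1) w
           in v @ [False, False] @ replicate (k + q) True))"

end

theory Submission
  imports Defs
begin

lemma run_eq: "replicate m c @ y = replicate n c @ z \<Longrightarrow> (y = [] \<or> hd y \<noteq> c)
  \<Longrightarrow> (z = [] \<or> hd z \<noteq> c) \<Longrightarrow> m = n \<and> y = z"
proof (induction m arbitrary: n)
  case 0 then show ?case by (cases n) auto
next
  case (Suc m) then show ?case by (cases n) auto
qed

lemma split_run: "\<exists>n y. w = replicate n c @ y \<and> (y = [] \<or> hd y \<noteq> c)"
proof (induction w)
  case Nil then show ?case by auto
next
  case (Cons d w)
  then obtain n y where h: "w = replicate n c @ y" "y = [] \<or> hd y \<noteq> c" by auto
  show ?case
  proof (cases "d = c")
    case True then show ?thesis using h by (intro exI[of _ "Suc n"] exI[of _ y]) auto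
  next
    case False then show ?thesis by (intro exI[of _ 0] exI[of _ "d # w"]) auto
  qed
qed

lemma split_head: assumes "w \<noteq> []" "hd w = False"
  shows "\<exists>a b v. 0 < a \<and> (0 < b \<or> v = []) \<and> (v = [] \<or> hd v = False)
     \<and> w = replicate a False @ replicate b True @ v"
proof -
  obtain a y where a: "w = replicate a False @ y" "y = [] \<or> hd y \<noteq> False"
    using split_run[of w False] by blast
  obtain b v where b: "y = replicate b True @ v" "v = [] \<or> hd v \<noteq> True"
    using split_run[of y True] by blast
  have "0 < a"
  proof (rule ccontr)
    assume "\<not> 0 < a"
    then have "y = w" using a by simp
    then show False using a assms by simp
  qed
  moreover have "0 < b \<or> v = []"
  proof (rule ccontr)
    assume "\<not> (0 < b \<or> v = [])"
    then have "y = v" "v \<noteq> []" using b by simp_all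
    then show False using a b by simp
  qed
  ultimately show ?thesis using a b by blast
qed

lemma split_last: assumes "False \<in> set w"
  shows "\<exists>x a k. 0 < a \<and> (x = [] \<or> last x = True) \<and> w = x @ replicate a False @ replicate k True"
proof -
  obtain k y where k: "rev w = replicate k True @ y" "y = [] \<or> hd y \<noteq> True"
    using split_run[of "rev w" True] by blast
  have "y \<noteq> []" using k assms by (metis append_Nil2 in_set_replicate set_rev)
  obtain a z where a: "y = replicate a False @ z" "z = [] \<or> hd z \<noteq> False"
    using split_run[of y False] by blast
  have "0 < a" using a k \<open>y \<noteq> []\<close> by (cases a) auto
  have "w = rev z @ replicate a False @ replicate k True"
    using k a by (metis append.assoc rev_append rev_replicate rev_rev_ident)
  moreover have "rev z = [] \<or> last (rev z) = True" using a by (auto simp: last_rev)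
  ultimately show ?thesis using \<open>0 < a\<close> by blast
qed

lemma qdec_Nil: "q_decreasing q []"
  unfolding q_decreasing_def by auto

lemma qdec_True: "q_decreasing q (True # w) \<longleftrightarrow> q_decreasing q w"
proof
  assume h: "q_decreasing q (True # w)"
  show "q_decreasing q w" unfolding q_decreasing_def
  proof (intro allI impI)
    fix u a b v
    assume H: "w = u @ replicate a False @ replicate b True @ v \<and> 0 < a \<and>
         (u = [] \<or> last u = True) \<and> (v = [] \<or> hd v = False)"
    then show "b < q * a" using h unfolding q_decreasing_def
      by (erule_tac x="True # u" in allE) auto
  qed
next
  assume h: "q_decreasing q w"
  show "q_decreasing q (True # w)" unfolding q_decreasing_def
  proof (intro allI impI)
    fix u a b v
    assume H: "True # w = u @ replicate a False @ replicate b True @ v \<and> 0 < a \<and>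
         (u = [] \<or> last u = True) \<and> (v = [] \<or> hd v = False)"
    then obtain u' where u: "u = True # u'"
      by (cases u; cases a) auto
    have "u' = [] \<or> last u' = True" using H u by (cases "u' = []") auto
    then show "b < q * a" using h H u unfolding q_decreasing_def by auto
  qed
qed

lemma qdec_allTrue: "q_decreasing q (replicate m True)"
  by (induction m) (auto simp: qdec_Nil qdec_True)

lemma lemP: "replicate a False @ replicate b True @ v = u @ False # r \<Longrightarrow> u \<noteq> []
  \<Longrightarrow> last u = True \<Longrightarrow> \<exists>u'. u = replicate a False @ replicate b True @ u' \<and> v = u' @ False # r"
proof (induction a arbitrary: u)
  case 0
  then show ?case
  proof (induction b arbitrary: u)
    case 0 then show ?case by auto
  next
    case (Suc b)
    then obtain u1 where u: "u = True # u1" by (cases u) auto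
    show ?case
    proof (cases "u1 = []")
      case True then show ?thesis using Suc.prems u by (cases b) auto
    next
      case False
      then show ?thesis using Suc.IH[of u1] Suc.prems u by auto
    qed
  qed
next
  case (Suc a)
  then obtain u1 where u: "u = False # u1" by (cases u) auto
  have "u1 \<noteq> []" using Suc.prems u by auto
  then show ?case using Suc.IH[of u1] Suc.prems u by auto
qed

lemma qdec_block: assumes "0 < a" "0 < b \<or> v = []" "v = [] \<or> hd v = False" "1 \<le> q"
  shows "q_decreasing q (replicate a False @ replicate b True @ v) \<longleftrightarrow> b < q * a \<and> q_decreasing q v"
proof
  assume h: "q_decreasing q (replicate a False @ replicate b True @ v)"
  have "b < q * a" using h assms unfolding q_decreasing_def
    by (erule_tac x="[]" in allE) auto
  moreover have "q_decreasing q v" unfolding q_decreasing_def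
  proof (intro allI impI)
    fix u a' b' v'
    assume H: "v = u @ replicate a' False @ replicate b' True @ v' \<and> 0 < a' \<and>
         (u = [] \<or> last u = True) \<and> (v' = [] \<or> hd v' = False)"
    have "0 < b" using assms H by auto
    have "replicate a False @ replicate b True @ v
        = (replicate a False @ replicate b True @ u) @ replicate a' False @ replicate b' True @ v'"
      using H by simp
    moreover have "last (replicate a False @ replicate b True @ u) = True"
      using H \<open>0 < b\<close> by (cases "u = []") auto
    ultimately show "b' < q * a'" using h H unfolding q_decreasing_def by blast
  qed
  ultimately show "b < q * a \<and> q_decreasing q v" by blast
next
  assume h: "b < q * a \<and> q_decreasing q v"
  show "q_decreasing q (replicate a False @ replicate b True @ v)" unfolding q_decreasing_def
  proof (intro allI impI)
    fix u a' b' v'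
    assume H: "replicate a False @ replicate b True @ v = u @ replicate a' False @ replicate b' True @ v' \<and> 0 < a' \<and>
         (u = [] \<or> last u = True) \<and> (v' = [] \<or> hd v' = False)"
    show "b' < q * a'"
    proof (cases "b' = 0")
      case True then show ?thesis using H assms by simp
    next
      case b0: False
      show ?thesis
      proof (cases "u = []")
        case True
        have e1: "replicate a False @ (replicate b True @ v) = replicate a' False @ (replicate b' True @ v')"
          using H True by simp
        have "a = a' \<and> replicate b True @ v = replicate b' True @ v'"
          apply (rule run_eq[OF e1])
          using assms b0 by (cases b; auto)+
        moreover then have "b = b' \<and> v = v'"
          using run_eq[of b True v b' v'] assms H by auto
        ultimately show ?thesis using h by simp
      next
        case False
        note uN = False
        obtain a1 where a1: "a' = Suc a1" using H by (cases a') auto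
        have "replicate a False @ replicate b True @ v = u @ False # (replicate a1 False @ replicate b' True @ v')"
          using H a1 by simp
        moreover have lu: "last u = True" using H uN by auto
        ultimately obtain u' where
          u': "u = replicate a False @ replicate b True @ u'"
              "v = u' @ False # (replicate a1 False @ replicate b' True @ v')"
          using lemP uN by blast
        have "u' = [] \<or> last u' = True" using u' H by (cases "u' = []") auto
        moreover have "v = u' @ replicate a' False @ replicate b' True @ v'" using u' a1 by simp
        ultimately show ?thesis using h H unfolding q_decreasing_def by blast
      qed
    qed
  qed
qed

lemma qdec_last_block:
  assumes "x = [] \<or> last x = True" "0 < a" "1 \<le> q"
  shows "q_decreasing q (x @ replicate a False @ replicate b True) \<longleftrightarrow> q_decreasing q x \<and> b < q * a"
  using assms(1)
proof (induction "length x" arbitrary: x rule: less_induct)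
  case less
  show ?case
  proof (cases x)
    case Nil
    then show ?thesis using qdec_block[of a b "[]" q] assms by (simp add: qdec_Nil)
  next
    case (Cons c x')
    have x'c: "x' = [] \<or> last x' = True" using less.prems Cons by (cases "x' = []") auto
    show ?thesis
    proof (cases c)
      case True
      then show ?thesis using less.hyps[of x'] x'c Cons by (simp add: qdec_True)
    next
      case False
      then obtain a' b' v' where d: "0 < a'" "0 < b' \<or> v' = []" "v' = [] \<or> hd v' = False"
          "x = replicate a' False @ replicate b' True @ v'"
        using split_head[of x] Cons by auto
      have "0 < b'"
      proof (rule ccontr)
        assume "\<not> 0 < b'"
        then have "x = replicate a' False" using d by simp
        moreover have "last x \<in> set x" using Cons by simp
        ultimately show False using less.prems Cons by auto
      qed
      have v'c: "v' = [] \<or> last v' = True" using less.prems d Cons by (cases "v' = []") auto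
      have lv: "length v' < length x" using d \<open>0 < a'\<close> by simp
      have e: "x @ replicate a False @ replicate b True
          = replicate a' False @ replicate b' True @ (v' @ replicate a False @ replicate b True)"
        using d by simp
      have h2: "v' @ replicate a False @ replicate b True = [] \<or>
          hd (v' @ replicate a False @ replicate b True) = False"
        using d(3) assms(2) by (cases "v' = []"; cases a) auto
      show ?thesis
        unfolding e
        apply (subst qdec_block[OF d(1) _ h2 assms(3)])
        using \<open>0 < b'\<close> apply simp
        apply (subst d(4))
        apply (subst qdec_block[OF d(1) d(2) d(3) assms(3)])
        using less.hyps[OF lv v'c] by auto
    qed
  qed
qed

lemma psi_form:
  assumes "0 < a"
  shows "psi q (x @ replicate a False @ replicate k True) = x @ replicate (a + 1) False @ replicate (k + q) True"
proof -
  obtain a' where a': "a = Suc a'" using assms by (cases a) auto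
  let ?w = "x @ replicate a False @ replicate k True"
  have nt: "\<not> (\<forall>y\<in>set ?w. y)" using a' by auto
  have r: "rev ?w = replicate k True @ (False # (replicate a' False @ rev x))"
    using a' by (simp add: replicate_append_same[symmetric])
  have tw0: "takeWhile (\<lambda>y. y) (replicate k True @ (False # rest)) = replicate k True" for rest
    by (induction k) auto
  have tw: "takeWhile (\<lambda>y. y) (rev ?w) = replicate k True"
    unfolding r by (rule tw0)
  have tk: "take (length ?w - k - 1) ?w = x @ replicate a' False"
    using a' by (simp add: replicate_append_same[symmetric])
  show ?thesis unfolding psi_def using nt tw tk a'
    by (simp add: Let_def replicate_append_same[symmetric])
qed

theorem proposition2:
  fixes q n :: nat
  assumes "1 \<le> q"
  shows "psi q ` qdec_words q n =
         {w \<in> qdec_words q (n + q + 1). \<exists>u. w = u @ replicate q True}"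
proof
  show "psi q ` qdec_words q n \<subseteq> {w \<in> qdec_words q (n + q + 1). \<exists>u. w = u @ replicate q True}"
  proof
    fix w' assume "w' \<in> psi q ` qdec_words q n"
    then obtain w where w: "w' = psi q w" "length w = n" "q_decreasing q w"
      unfolding qdec_words_def binwords_def by auto
    show "w' \<in> {w \<in> qdec_words q (n + q + 1). \<exists>u. w = u @ replicate q True}"
    proof (cases "\<forall>y\<in>set w. y")
      case True
      then have "psi q w = replicate (length w + q + 1) True"
        unfolding psi_def by (rule if_P)
      then have e: "w' = replicate (n + q + 1) True" using w by simp
      have "replicate (n + q + 1) True = replicate (n + 1) True @ replicate q True"
        by (simp add: replicate_add[symmetric])
      moreover have "q_decreasing q w'" unfolding e by (rule qdec_allTrue)
      moreover have "length w' = n + q + 1" unfolding e by simp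
      ultimately show ?thesis unfolding qdec_words_def binwords_def using e by blast
    next
      case False
      then have "False \<in> set w" by auto
      then obtain x a k where d: "0 < a" "x = [] \<or> last x = True"
        "w = x @ replicate a False @ replicate k True" using split_last by blast
      have p: "w' = x @ replicate (a + 1) False @ replicate (k + q) True"
        using w d psi_form by simp
      have "q_decreasing q x \<and> k < q * a" using w d qdec_last_block assms by blast
      then have "q_decreasing q w'"
        using p d qdec_last_block[of x "a+1" q "k+q"] assms by (simp add: algebra_simps)
      moreover have "length w' = n + q + 1" using p w d by simp
      moreover have "w' = (x @ replicate (a + 1) False @ replicate k True) @ replicate q True"
        using p by (simp add: replicate_add)
      ultimately show ?thesis unfolding qdec_words_def binwords_def by blast
    qed
  qed
next
  show "{w \<in> qdec_words q (n + q + 1). \<exists>u. w = u @ replicate q True} \<subseteq> psi q ` qdec_words q n"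
  proof
    fix w' assume "w' \<in> {w \<in> qdec_words q (n + q + 1). \<exists>u. w = u @ replicate q True}"
    then obtain u where w': "length w' = n + q + 1" "q_decreasing q w'" "w' = u @ replicate q True"
      unfolding qdec_words_def binwords_def by auto
    show "w' \<in> psi q ` qdec_words q n"
    proof (cases "\<forall>y\<in>set w'. y")
      case True
      then have "\<forall>y\<in>set w'. y = True" by simp
      then have "replicate (length w') True = w'" by (rule replicate_length_same)
      then have "w' = replicate (n + q + 1) True" using w'(1) by simp
      moreover have "psi q (replicate n True) = replicate (n + q + 1) True" unfolding psi_def by simp
      moreover have "replicate n True \<in> qdec_words q n"
        unfolding qdec_words_def binwords_def using qdec_allTrue by auto
      ultimately show ?thesis by (simp add: rev_image_eqI)
    next
      case False
      then have "False \<in> set w'" by auto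
      then obtain x a m where d: "0 < a" "x = [] \<or> last x = True"
        "w' = x @ replicate a False @ replicate m True" using split_last by blast
      have hq: "q_decreasing q x \<and> m < q * a"
        using qdec_last_block[OF d(2) d(1) assms, of m] w'(2) d(3) by simp
      have "q \<le> m"
      proof (rule ccontr)
        assume "\<not> q \<le> m"
        have "rev w' = replicate q True @ rev u" using w' by simp
        moreover have "rev w' = replicate m True @ False # replicate (a - 1) False @ rev x"
          using d by (cases a) (auto simp: replicate_append_same[symmetric])
        ultimately have "(replicate q True @ rev u) ! m = (replicate m True @ False # replicate (a - 1) False @ rev x) ! m"
          by simp
        then show False using \<open>\<not> q \<le> m\<close> by (simp add: nth_append)
      qed
      have "2 \<le> a"
      proof (rule ccontr)
        assume "\<not> 2 \<le> a"
        then have "a = 1" using d by simp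
        then show False using hq \<open>q \<le> m\<close> by simp
      qed
      define w where "w = x @ replicate (a - 1) False @ replicate (m - q) True"
      have pw: "psi q w = w'" unfolding w_def using psi_form[of "a - 1" q x "m - q"] \<open>2 \<le> a\<close> \<open>q \<le> m\<close> d by simp
      have e: "q * (a - 1) = q * a - q" by (simp add: diff_mult_distrib2)
      have lt: "m - q < q * (a - 1)" unfolding e using hq \<open>q \<le> m\<close> by linarith
      have a1: "0 < a - 1" using \<open>2 \<le> a\<close> by simp
      have "q_decreasing q w"
        unfolding w_def using qdec_last_block[OF d(2) a1 assms, of "m - q"] hq lt by simp
      moreover have "length w = n" unfolding w_def using w'(1) d \<open>2 \<le> a\<close> \<open>q \<le> m\<close> by simp
      ultimately have "w \<in> qdec_words q n" unfolding qdec_words_def binwords_def by simp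
      from this pw[symmetric] show ?thesis by (rule rev_image_eqI)
    qed
  qed
qed

end
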